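(* Let $G=(\mathcal V,\mathcal E)$ be an acyclic ADT network over $\mathbb F_q$ with a single source supernode $S$ and destination supernodes $T_1,\dots,T_N$, and let $A$, $F$, $B$ be its encoding, adjacency and decoding matrices. Then $I-F$ is invertible, and the system matrix $M$, i.e. the matrix satisfying $\mathcal Z=\mathcal X(S)\,M$ for every value of the source processes, is $$M=A\,(I-F)^{-1}\,B^T .$$
   Context: ADT network model. $G=(\mathcal V,\mathcal E)$ is a directed acyclic network whose nodes ("supernodes") $V\in\mathcal V$ each consist of a finite set of input ports $I(V)$ and output ports $O(V)$, all ports being distinct. Each edge $(e,e')\in\mathcal E$ goes from an output port of one supernode to an input port of another supernode. Fix a finite field $\mathbb F_q$; each edge carries one symbol of $\mathbb F_q$. The source $S$ has source processes $\mathcal X(S)=[X(S,1),\dots,X(S,\mu(S))]$ with $\mu(S)\le |O(S)|$. Linear coding rules: - Each output port $e\in O(V)$ carries $Y(e)=\sum_{e'\in I(V)}\beta_{(e',e)}Y(e')$. If $V=S$, the term $\sum_{i}\alpha_{(i,e)}X(S,i)$ is added. - An output port sends the same symbol on all of its outgoing edges (broadcast). - An input port $e'$ receives the $\mathbb F_q$-sum of the symbols on all edges entering it: $Y(e')=\sum_{(e,e')\in\mathcal E}Y(e)$ (additive MAC). - Destination $T$ outputs $Z(T,k)=\sum_{e'\in I(T)}\epsilon_{(e',(T,k))}Y(e')$ for $k=1,\dots,\nu(T)$. The coefficients $\alpha,\beta,\epsilon\in\mathbb F_q$ are free. Write $\mathcal Z=[\mathcal Z(T_1),\dots,\mathcal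 Z(T_N)]$ for the row vector of all destination outputs. Matrices. Index all ports as $e_1,\dots,e_m$. The adjacency matrix $F$ is the $m\times m$ matrix with entries $$F_{i,j}=\begin{cases}1 & \text{if } (e_i,e_j)\in\mathcal E,\\ \beta_{(e_i,e_j)} & \text{if } e_i\in I(V),\ e_j\in O(V) \text{ for some supernode } V,\\ 0 & \text{otherwise.}\end{cases}$$ The encoding matrix $A$ is the $\mu(S)\times m$ matrix with $A_{i,j}=\alpha_{(i,e_j)}$ if $e_j\in O(S)$, and $0$ otherwise. The decoding matrix $B$ is $|\mathcal Z|\times m$. Its rows are indexed by the pairs $(T_j,k)$, and its entry in row $(T_j,k)$, column $e_i$ is $\epsilon_{(e_i,(T_j,k))}$ if $e_i\in I(T_j)$, and $0$ otherwise. *)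

theory Defs
  imports "HOL-Analysis.Analysis"
begin

text \<open>Supernodes have type 'v, ports have the finite type 'p
 (the type 'p is exactly the set of all ports e_1..e_m, so m = CARD('p)).
 inp V, outp V are the input/output ports of supernode V; E is the edge set.
 Coefficients: beta e' e (input e' to output e of the same supernode),
 alpha i e (source process i to output e of S), eps e z (input port e to
 destination output z). Destination outputs are indexed by the finite type 'z;
 dest z is the destination supernode T_j to which output z = (T_j,k) belongs.\<close>

definition supernode_rel :: "('v \<Rightarrow> 'p set) \<Rightarrow> ('v \<Rightarrow> 'p set) \<Rightarrow> ('p \<times> 'p) set \<Rightarrow> ('v \<times> 'v) set" where
  "supernode_rel inp outp E =
     {(V, W). \<exists>e e'. (e, e') \<in> E \<and> e \<in> outp V \<and> e' \<in> inp W}"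

definition adt_network :: "('v \<Rightarrow> 'p set) \<Rightarrow> ('v \<Rightarrow> 'p set) \<Rightarrow> ('p \<times> 'p) set \<Rightarrow> bool" where
  "adt_network inp outp E \<longleftrightarrow>
     (\<forall>V. inp V \<inter> outp V = {}) \<and>
     (\<forall>V W. V \<noteq> W \<longrightarrow> (inp V \<union> outp V) \<inter> (inp W \<union> outp W) = {}) \<and>
     (\<forall>e::'p. \<exists>V. e \<in> inp V \<union> outp V) \<and>
     (\<forall>e e'. (e, e') \<in> E \<longrightarrow> (\<exists>V W. V \<noteq> W \<and> e \<in> outp V \<and> e' \<in> inp W)) \<and>
     acyclic (supernode_rel inp outp E)"

definition adj_matrix :: "('v \<Rightarrow> 'p set) \<Rightarrow> ('v \<Rightarrow> 'p set) \<Rightarrow> ('p \<times> 'p) set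
    \<Rightarrow> ('p \<Rightarrow> 'p \<Rightarrow> 'a::field) \<Rightarrow> 'a ^ 'p ^ 'p" where
  "adj_matrix inp outp E beta =
     (\<chi> i j. if (i, j) \<in> E then 1
            else if (\<exists>V. i \<in> inp V \<and> j \<in> outp V) then beta i j else 0)"

definition enc_matrix :: "('v \<Rightarrow> 'p set) \<Rightarrow> 'v \<Rightarrow> ('i \<Rightarrow> 'p \<Rightarrow> 'a::field) \<Rightarrow> 'a ^ 'p ^ 'i" where
  "enc_matrix outp S alpha = (\<chi> i j. if j \<in> outp S then alpha i j else 0)"

definition dec_matrix :: "('v \<Rightarrow> 'p set) \<Rightarrow> ('z \<Rightarrow> 'v) \<Rightarrow> ('p \<Rightarrow> 'z \<Rightarrow> 'a::field) \<Rightarrow> 'a ^ 'p ^ 'z" where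
  "dec_matrix inp dest eps = (\<chi> z e. if e \<in> inp (dest z) then eps e z else 0)"

definition coding_rules :: "('v \<Rightarrow> 'p set) \<Rightarrow> ('v \<Rightarrow> 'p set) \<Rightarrow> ('p \<times> 'p) set \<Rightarrow> 'v
    \<Rightarrow> ('p \<Rightarrow> 'p \<Rightarrow> 'a::field) \<Rightarrow> ('i::finite \<Rightarrow> 'p \<Rightarrow> 'a) \<Rightarrow> 'a ^ 'i \<Rightarrow> ('p \<Rightarrow> 'a) \<Rightarrow> bool" where
  "coding_rules inp outp E S beta alpha X Y \<longleftrightarrow>
     (\<forall>V e. e \<in> outp V \<longrightarrow>
        Y e = (\<Sum>e'\<in>inp V. beta e' e * Y e')
              + (if V = S then (\<Sum>i\<in>UNIV. alpha i e * X $ i) else 0)) \<and>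
     (\<forall>V e'. e' \<in> inp V \<longrightarrow> Y e' = (\<Sum>e\<in>{e. (e, e') \<in> E}. Y e))"

definition dest_outputs :: "('v \<Rightarrow> 'p set) \<Rightarrow> ('z \<Rightarrow> 'v) \<Rightarrow> ('p \<Rightarrow> 'z \<Rightarrow> 'a::field)
    \<Rightarrow> ('p \<Rightarrow> 'a) \<Rightarrow> 'a ^ 'z" where
  "dest_outputs inp dest eps Y = (\<chi> z. \<Sum>e'\<in>inp (dest z). eps e' z * Y e')"

end

theory Submission
  imports Defs
begin

lemma net_facts:
  assumes net: "adt_network inp outp E"
  shows "\<And>V W e. e \<in> inp V \<union> outp V \<Longrightarrow> e \<in> inp W \<union> outp W \<Longrightarrow> V = W"
    and "\<And>V W e. e \<in> inp V \<Longrightarrow> e \<in> outp W \<Longrightarrow> False"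
    and "\<And>e e'. (e, e') \<in> E \<Longrightarrow> \<exists>V W. V \<noteq> W \<and> e \<in> outp V \<and> e' \<in> inp W"
    and "acyclic (supernode_rel inp outp E)"
    and "\<And>e. \<exists>V. e \<in> inp V \<union> outp V"
proof -
  have d: "\<forall>V W. V \<noteq> W \<longrightarrow> (inp V \<union> outp V) \<inter> (inp W \<union> outp W) = {}"
    and io: "\<forall>V. inp V \<inter> outp V = {}"
    and c: "\<forall>e::'b. \<exists>V. e \<in> inp V \<union> outp V"
    and ed: "\<forall>e e'. (e, e') \<in> E \<longrightarrow> (\<exists>V W. V \<noteq> W \<and> e \<in> outp V \<and> e' \<in> inp W)"
    and ac: "acyclic (supernode_rel inp outp E)"
    using net unfolding adt_network_def by simp_all
  show u: "\<And>V W e. e \<in> inp V \<union> outp V \<Longrightarrow> e \<in> inp W \<union> outp W \<Longrightarrow> V = W"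
  proof (rule ccontr)
    fix V W e assume "e \<in> inp V \<union> outp V" "e \<in> inp W \<union> outp W" "V \<noteq> W"
    then show False using d by (metis IntI empty_iff)
  qed
  show "\<And>V W e. e \<in> inp V \<Longrightarrow> e \<in> outp W \<Longrightarrow> False"
  proof -
    fix V W e assume a: "e \<in> inp V" "e \<in> outp W"
    then have "V = W" using u by blast
    then show False using a io by blast
  qed
  show "\<And>e e'. (e, e') \<in> E \<Longrightarrow> \<exists>V W. V \<noteq> W \<and> e \<in> outp V \<and> e' \<in> inp W"
    using ed by blast
  show "acyclic (supernode_rel inp outp E)" by (rule ac)
  show "\<And>e. \<exists>V. e \<in> inp V \<union> outp V" using c by blast
qed

lemma wf_rel:
  fixes inp outp :: "'v \<Rightarrow> 'p::finite set"
  assumes net: "adt_network inp outp E"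
  shows "wf (supernode_rel inp outp E)"
proof -
  define own where "own e = (SOME V. e \<in> inp V \<union> outp V)" for e
  have own: "e \<in> inp V \<union> outp V \<Longrightarrow> own e = V" for e V
  proof -
    assume h: "e \<in> inp V \<union> outp V"
    have "own e \<in> {V. e \<in> inp V \<union> outp V}" unfolding own_def
      using h by (metis (mono_tags, lifting) mem_Collect_eq someI_ex)
    then show ?thesis using net_facts(1)[OF net, of e] h by simp
  qed
  have "supernode_rel inp outp E \<subseteq> range own \<times> range own"
  proof
    fix p assume "p \<in> supernode_rel inp outp E"
    then obtain V W e e' where p: "p = (V, W)" "e \<in> outp V" "e' \<in> inp W"
      unfolding supernode_rel_def by blast
    have "own e = V" "own e' = W" using own p by auto
    then show "p \<in> range own \<times> range own" using p by (metis SigmaI rangeI)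
  qed
  then have "finite (supernode_rel inp outp E)"
    by (rule finite_subset) simp
  then show ?thesis by (rule finite_acyclic_wf) (rule net_facts(4)[OF net])
qed

lemma kernel:
  fixes inp outp :: "'v \<Rightarrow> 'p::finite set"
    and beta :: "'p \<Rightarrow> 'p \<Rightarrow> 'a::field"
  assumes net: "adt_network inp outp E"
    and x: "\<And>j. x $ j = (\<Sum>i\<in>UNIV. x $ i * adj_matrix inp outp E beta $ i $ j)"
  shows "x = 0"
proof -
  note nf = net_facts[OF net]
  let ?R = "supernode_rel inp outp E"
  have main: "\<forall>e \<in> inp V \<union> outp V. x $ e = 0" for V
    using wf_rel[OF net]
  proof (induct V rule: wf_induct_rule)
    case (less V)
    have inz: "x $ e' = 0" if e': "e' \<in> inp V" for e'
    proof -
      have "x $ e' = (\<Sum>i\<in>UNIV. x $ i * adj_matrix inp outp E beta $ i $ e')" by (rule x)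
      also have "\<dots> = 0"
      proof (rule sum.neutral, rule ballI)
        fix i
        show "x $ i * adj_matrix inp outp E beta $ i $ e' = 0"
        proof (cases "(i, e') \<in> E")
          case True
          then obtain W V' where "W \<noteq> V'" "i \<in> outp W" "e' \<in> inp V'" using nf(3) by blast
          then have "V' = V" using nf(1) e' by blast
          then have "(W, V) \<in> ?R" unfolding supernode_rel_def
            using True \<open>i \<in> outp W\<close> \<open>e' \<in> inp V'\<close> by blast
          then have "x $ i = 0" using less \<open>i \<in> outp W\<close> by blast
          then show ?thesis by simp
        next
          case False
          have "\<not> (\<exists>V. i \<in> inp V \<and> e' \<in> outp V)" using nf(2) e' by blast
          then have "adj_matrix inp outp E beta $ i $ e' = 0"
            using False unfolding adj_matrix_def by auto
          then show ?thesis by simp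
        qed
      qed
      finally show ?thesis .
    qed
    have outz: "x $ e = 0" if e: "e \<in> outp V" for e
    proof -
      have "x $ e = (\<Sum>i\<in>UNIV. x $ i * adj_matrix inp outp E beta $ i $ e)" by (rule x)
      also have "\<dots> = 0"
      proof (rule sum.neutral, rule ballI)
        fix i
        show "x $ i * adj_matrix inp outp E beta $ i $ e = 0"
        proof (cases "(i, e) \<in> E")
          case True
          then show ?thesis using nf(3) nf(2) e by blast
        next
          case False
          show ?thesis
          proof (cases "\<exists>V'. i \<in> inp V' \<and> e \<in> outp V'")
            case True
            then obtain V' where "i \<in> inp V'" "e \<in> outp V'" by blast
            then have "V' = V" using nf(1) e by blast
            then show ?thesis using inz \<open>i \<in> inp V'\<close> by simp
          next
            case c2: False
            then show ?thesis using False by (auto simp: adj_matrix_def)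
          qed
        qed
      qed
      finally show ?thesis .
    qed
    show ?case using inz outz by blast
  qed
  show ?thesis
  proof (rule iffD2[OF vec_eq_iff], rule allI)
    fix e
    obtain V where "e \<in> inp V \<union> outp V" using nf(5) by blast
    then show "x $ e = 0 $ e" using main by simp
  qed
qed

lemma invertible_IF:
  fixes inp outp :: "'v \<Rightarrow> 'p::finite set"
    and beta :: "'p \<Rightarrow> 'p \<Rightarrow> 'a::field"
  assumes net: "adt_network inp outp E"
  shows "invertible (mat 1 - adj_matrix inp outp E beta)"
proof -
  let ?M = "mat 1 - adj_matrix inp outp E beta"
  have "\<forall>x. transpose ?M *v x = 0 \<longrightarrow> x = 0"
  proof (intro allI impI)
    fix x :: "'a ^ 'p"
    assume "transpose ?M *v x = 0"
    then have h: "x v* ?M = 0" by simp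
    have "x v* ?M = x - x v* adj_matrix inp outp E beta"
      by (simp add: vector_matrix_mult_diff_rdistrib)
    with h have eq: "x = x v* adj_matrix inp outp E beta" by simp
    show "x = 0"
    proof (rule kernel[OF net])
      fix j show "x $ j = (\<Sum>i\<in>UNIV. x $ i * adj_matrix inp outp E beta $ i $ j)"
        by (subst eq) (simp add: vector_matrix_mult_def)
    qed
  qed
  then have "\<exists>B. B ** transpose ?M = mat 1" using matrix_left_invertible_ker by blast
  then have "\<exists>B. ?M ** B = mat 1" using left_invertible_transpose by blast
  then show ?thesis using invertible_right_inverse by blast
qed




theorem theorem1:
  fixes inp outp :: "'v \<Rightarrow> 'p::finite set"
    and E :: "('p \<times> 'p) set"
    and S :: 'v and Ts :: "'v set"
    and dest :: "'z::finite \<Rightarrow> 'v"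
    and beta :: "'p \<Rightarrow> 'p \<Rightarrow> 'a::{field,finite}"
    and alpha :: "'i::finite \<Rightarrow> 'p \<Rightarrow> 'a"
    and eps :: "'p \<Rightarrow> 'z \<Rightarrow> 'a"
  assumes net: "adt_network inp outp E"
    and mu: "CARD('i) \<le> card (outp S)"
    and dests: "\<forall>z. dest z \<in> Ts"
  shows "invertible (mat 1 - adj_matrix inp outp E beta)
    \<and> (\<forall>X Y. coding_rules inp outp E S beta alpha X Y \<longrightarrow>
          dest_outputs inp dest eps Y
          = X v* (enc_matrix outp S alpha ** matrix_inv (mat 1 - adj_matrix inp outp E beta)
                  ** transpose (dec_matrix inp dest eps)))"
proof -
  let ?F = "adj_matrix inp outp E beta"
  let ?M = "mat 1 - ?F"
  let ?A = "enc_matrix outp S alpha"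
  let ?B = "dec_matrix inp dest eps"
  note nf = net_facts[OF net]
  have inv: "invertible ?M" by (rule invertible_IF[OF net])
  then have MM: "?M ** matrix_inv ?M = mat 1"
    unfolding invertible_def matrix_inv_def by (rule someI2_ex) blast
  have "dest_outputs inp dest eps Y = X v* (?A ** matrix_inv ?M ** transpose ?B)"
    if cr: "coding_rules inp outp E S beta alpha X Y" for X Y
  proof -
    define y where "y = (\<chi> e. Y e)"
    have yF: "y v* ?M = X v* ?A"
    proof (rule iffD2[OF vec_eq_iff], rule allI)
      fix j
      have lhs: "(y v* ?M) $ j = Y j - (\<Sum>i\<in>UNIV. Y i * ?F $ i $ j)"
      proof -
        have "y v* ?M = y - y v* ?F" by (simp add: vector_matrix_mult_diff_rdistrib)
        then show ?thesis by (simp add: vector_matrix_mult_def y_def)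
      qed
      have rhs: "(X v* ?A) $ j = (if j \<in> outp S then (\<Sum>i\<in>UNIV. alpha i j * X $ i) else 0)"
        by (auto simp: vector_matrix_mult_def enc_matrix_def mult.commute intro: sum.cong)
      obtain V where V: "j \<in> inp V \<union> outp V" using nf(5) by blast
      show "(y v* ?M) $ j = (X v* ?A) $ j"
      proof (cases "j \<in> inp V")
        case True
        have r: "Y j = (\<Sum>e\<in>{e. (e, j) \<in> E}. Y e)" using cr True unfolding coding_rules_def by blast
        have "(\<Sum>i\<in>UNIV. Y i * ?F $ i $ j) = (\<Sum>i\<in>UNIV. if (i, j) \<in> E then Y i else 0)"
        proof (rule sum.cong, simp)
          fix i
          have "\<not> (\<exists>V. i \<in> inp V \<and> j \<in> outp V)" using nf(2) True by blast
          then show "Y i * ?F $ i $ j = (if (i, j) \<in> E then Y i else 0)"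
            unfolding adj_matrix_def by auto
        qed
        also have "\<dots> = (\<Sum>e\<in>{e. (e, j) \<in> E}. Y e)"
          by (simp add: sum.If_cases Int_def)
        finally have "(y v* ?M) $ j = 0" using lhs r by simp
        moreover have "j \<notin> outp S" using nf(2) True by blast
        ultimately show ?thesis using rhs by simp
      next
        case False
        then have jo: "j \<in> outp V" using V by blast
        have r: "Y j = (\<Sum>e'\<in>inp V. beta e' j * Y e')
              + (if V = S then (\<Sum>i\<in>UNIV. alpha i j * X $ i) else 0)"
          using cr jo unfolding coding_rules_def by blast
        have "(\<Sum>i\<in>UNIV. Y i * ?F $ i $ j) = (\<Sum>i\<in>UNIV. if i \<in> inp V then beta i j * Y i else 0)"
        proof (rule sum.cong, simp)
          fix i
          have nE: "(i, j) \<notin> E" using nf(3) nf(2) jo by blast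
          have "(\<exists>V'. i \<in> inp V' \<and> j \<in> outp V') \<longleftrightarrow> i \<in> inp V"
            using nf(1) jo by blast
          then show "Y i * ?F $ i $ j = (if i \<in> inp V then beta i j * Y i else 0)"
            unfolding adj_matrix_def using nE by (simp add: mult.commute)
        qed
        also have "\<dots> = (\<Sum>e'\<in>inp V. beta e' j * Y e')"
          by (simp add: sum.If_cases)
        finally have "(y v* ?M) $ j = (if V = S then (\<Sum>i\<in>UNIV. alpha i j * X $ i) else 0)"
          using lhs r by simp
        moreover have "(j \<in> outp S) \<longleftrightarrow> V = S" using nf(1) jo by blast
        ultimately show ?thesis using rhs by simp
      qed
    qed
    have yv: "y = (X v* ?A) v* matrix_inv ?M"
      by (metis yF MM vector_matrix_mul_assoc vector_matrix_mul_rid)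
    have "dest_outputs inp dest eps Y = y v* transpose ?B"
    proof (rule iffD2[OF vec_eq_iff], rule allI)
      fix z
      have "(y v* transpose ?B) $ z = (\<Sum>e\<in>UNIV. if e \<in> inp (dest z) then eps e z * Y e else 0)"
        by (auto simp: vector_matrix_mult_def transpose_def dec_matrix_def y_def mult.commute intro: sum.cong)
      also have "\<dots> = (\<Sum>e\<in>inp (dest z). eps e z * Y e)"
        by (simp add: sum.If_cases)
      finally show "dest_outputs inp dest eps Y $ z = (y v* transpose ?B) $ z"
        by (simp add: dest_outputs_def)
    qed
    then show ?thesis unfolding yv vector_matrix_mul_assoc .
  qed
  then show ?thesis using inv by blast
qed

end
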